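(* Let $n=p^{\alpha}qr$ where $p,q,r$ are distinct primes and $\alpha\geq 1$ is an integer. Then $\mathbb{AG}(\mathbb{Z}_n)$ has no induced cycle of odd length greater than $3$.
   Context: For a commutative ring $R$ with unity, the annihilating-ideal graph $\mathbb{AG}(R)$ is the simple graph whose vertex set is the set of all non-zero ideals of $R$ with non-zero annihilator, two distinct vertices $I,J$ being adjacent if and only if $IJ=0$. An induced cycle is a cycle in the graph with no chords, i.e. an induced subgraph isomorphic to a cycle. *)

theory Defs
  imports "HOL-Algebra.Ideal_Product" "HOL-Number_Theory.Residues"
begin

definition ann :: "('a, 'b) ring_scheme \<Rightarrow> 'a set \<Rightarrow> 'a set" where
  "ann R I = {x \<in> carrier R. \<forall>y \<in> I. x \<otimes>\<^bsub>R\<^esub> y = \<zero>\<^bsub>R\<^esub>}"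

definition AG_vertex :: "('a, 'b) ring_scheme \<Rightarrow> 'a set \<Rightarrow> bool" where
  "AG_vertex R I \<longleftrightarrow> ideal I R \<and> I \<noteq> {\<zero>\<^bsub>R\<^esub>} \<and> ann R I \<noteq> {\<zero>\<^bsub>R\<^esub>}"

definition AG_adj :: "('a, 'b) ring_scheme \<Rightarrow> 'a set \<Rightarrow> 'a set \<Rightarrow> bool" where
  "AG_adj R I J \<longleftrightarrow> AG_vertex R I \<and> AG_vertex R J \<and> I \<noteq> J \<and> ideal_prod R I J = {\<zero>\<^bsub>R\<^esub>}"

definition AG_induced_cycle :: "('a, 'b) ring_scheme \<Rightarrow> nat \<Rightarrow> (nat \<Rightarrow> 'a set) \<Rightarrow> bool" where
  "AG_induced_cycle R k v \<longleftrightarrow> 3 \<le> k \<and> inj_on v {0..<k} \<and> (\<forall>i<k. AG_vertex R (v i)) \<and>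
     (\<forall>i<k. \<forall>j<k. AG_adj R (v i) (v j) \<longleftrightarrow> (j = Suc i mod k \<or> i = Suc j mod k))"

end

theory Submission
  imports Defs "HOL-Computational_Algebra.Primes"
begin

lemma ideal_prod_mono_left:
  assumes "s \<in> ideal_prod R J' K" "J' \<subseteq> J"
  shows "s \<in> ideal_prod R J K"
  using assms by (induct s rule: ideal_prod.induct) (auto intro: ideal_prod.intros)

lemma suc_mod: "i < k \<Longrightarrow> Suc i mod (k::nat) = (if Suc i = k then 0 else Suc i)"
  by auto

lemma index_lemma:
  fixes k x y :: nat
  assumes "5 \<le> k" "x < k" "y < k" "x \<noteq> y"
  shows "\<exists>z<k. z \<noteq> y \<and> (z = Suc x mod k \<or> x = Suc z mod k) \<and>
              \<not> (z = Suc y mod k \<or> y = Suc z mod k)"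
proof -
  define a where "a = (if Suc x = k then 0 else Suc x)"
  define b where "b = (if x = 0 then k - 1 else x - 1)"
  have a: "a < k" "a = Suc x mod k" using assms by (auto simp: a_def suc_mod)
  have b: "b < k" "x = Suc b mod k" using assms by (auto simp: b_def suc_mod)
  have sa: "Suc a mod k = (if Suc a = k then 0 else Suc a)" using a suc_mod by blast
  have sb: "Suc b mod k = (if Suc b = k then 0 else Suc b)" using b suc_mod by blast
  have sy: "Suc y mod k = (if Suc y = k then 0 else Suc y)" using assms suc_mod by blast
  show ?thesis
  proof (cases "a \<noteq> y \<and> \<not> (a = Suc y mod k \<or> y = Suc a mod k)")
    case True then show ?thesis using a by blast
  next
    case False
    hence F: "a = y \<or> a = (if Suc y = k then 0 else Suc y) \<or> y = (if Suc a = k then 0 else Suc a)"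
      using sa sy by simp
    have "b \<noteq> y \<and> \<not> (b = (if Suc y = k then 0 else Suc y) \<or> y = (if Suc b = k then 0 else Suc b))"
      using F assms unfolding a_def b_def by (simp split: if_splits; linarith)
    then show ?thesis using b sb sy by metis
  qed
qed

lemma graph_lemma:
  assumes "ring R" "AG_induced_cycle R k v" "5 \<le> k" "x < k" "y < k" "x \<noteq> y"
    "v y \<subseteq> v x"
  shows False
proof -
  have c: "3 \<le> k \<and> inj_on v {0..<k} \<and> (\<forall>i<k. AG_vertex R (v i)) \<and>
     (\<forall>i<k. \<forall>j<k. AG_adj R (v i) (v j) \<longleftrightarrow> (j = Suc i mod k \<or> i = Suc j mod k))"
    using assms(2) unfolding AG_induced_cycle_def .
  from c have cyc: "inj_on v {0..<k}" "\<forall>i<k. AG_vertex R (v i)"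
    "\<forall>i<k. \<forall>j<k. AG_adj R (v i) (v j) \<longleftrightarrow> (j = Suc i mod k \<or> i = Suc j mod k)"
    by blast+
  obtain z where z: "z < k" "z \<noteq> y" "z = Suc x mod k \<or> x = Suc z mod k"
    "\<not> (z = Suc y mod k \<or> y = Suc z mod k)"
    using index_lemma[OF assms(3-6)] by blast
  have adj: "AG_adj R (v x) (v z)" using iffD2[OF cyc(3)[rule_format, OF assms(4) z(1)] z(3)] .
  have "AG_adj R (v y) (v z)"
    unfolding AG_adj_def
  proof (intro conjI)
    show "AG_vertex R (v y)" "AG_vertex R (v z)" using cyc(2) assms(5) z(1) by blast+
    show "v y \<noteq> v z"
    proof
      assume "v y = v z"
      moreover have "y \<in> {0..<k}" "z \<in> {0..<k}" using assms(5) z(1) by auto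
      ultimately have "y = z" by (rule inj_onD[OF cyc(1)])
      thus False using z(2) by simp
    qed
    have "ideal_prod R (v y) (v z) \<subseteq> ideal_prod R (v x) (v z)"
      using ideal_prod_mono_left[OF _ assms(7)] by (rule subsetI)
    also have "\<dots> = {\<zero>\<^bsub>R\<^esub>}" using adj by (simp add: AG_adj_def)
    finally have sub: "ideal_prod R (v y) (v z) \<subseteq> {\<zero>\<^bsub>R\<^esub>}" .
    have iy: "ideal (v y) R" "ideal (v z) R" using cyc(2) assms(5) z(1) unfolding AG_vertex_def by blast+
    have "\<zero>\<^bsub>R\<^esub> \<in> v y" "\<zero>\<^bsub>R\<^esub> \<in> v z"
      using iy additive_subgroup.zero_closed ideal.axioms(1) by metis+
    hence "\<zero>\<^bsub>R\<^esub> \<otimes>\<^bsub>R\<^esub> \<zero>\<^bsub>R\<^esub> \<in> ideal_prod R (v y) (v z)" by (rule ideal_prod.prod)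
    moreover have "\<zero>\<^bsub>R\<^esub> \<otimes>\<^bsub>R\<^esub> \<zero>\<^bsub>R\<^esub> = \<zero>\<^bsub>R\<^esub>" 
    proof -
      interpret ring R by (rule assms(1))
      show ?thesis by simp
    qed
    ultimately have "\<zero>\<^bsub>R\<^esub> \<in> ideal_prod R (v y) (v z)" by (simp only:)
    then show "ideal_prod R (v y) (v z) = {\<zero>\<^bsub>R\<^esub>}" using sub by blast
  qed
  then show False using iffD1[OF cyc(3)[rule_format, OF assms(5) z(1)]] z(4) by blast
qed


lemma ideal_char:
  fixes n :: int
  assumes n1: "n > 1" and I: "ideal I (residue_ring n)"
  shows "\<exists>d>0. d dvd n \<and> I = {x. 0 \<le> x \<and> x < n \<and> d dvd x}"
proof -
  interpret R: residues n "residue_ring n" by unfold_locales (simp_all add: n1)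
  have Icar: "x \<in> I \<Longrightarrow> 0 \<le> x \<and> x < n" for x
    using ideal.Icarr[OF I] R.res_carrier_eq by force
  have cl: "0 \<le> c \<Longrightarrow> c < n \<Longrightarrow> x \<in> I \<Longrightarrow> (c * x) mod n \<in> I" for c x
    using ideal.I_l_closed[OF I, of x c] R.res_carrier_eq R.res_mult_eq by auto
  have addc: "x \<in> I \<Longrightarrow> y \<in> I \<Longrightarrow> (x + y) mod n \<in> I" for x y
    using additive_subgroup.a_closed[OF ideal.axioms(1)[OF I]] R.res_add_eq by metis
  have negc: "x \<in> I \<Longrightarrow> (- x) mod n \<in> I" for x
    using additive_subgroup.a_inv_closed[OF ideal.axioms(1)[OF I]] R.res_neg_eq by metis
  have subc: "x \<in> I \<Longrightarrow> y \<in> I \<Longrightarrow> (x - y) mod n \<in> I" for x y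
  proof -
    assume "x \<in> I" "y \<in> I"
    then have "(x + (- y) mod n) mod n \<in> I" using addc negc by blast
    then show ?thesis by (simp add: mod_add_right_eq)
  qed
  have z: "0 \<in> I"
    using additive_subgroup.zero_closed[OF ideal.axioms(1)[OF I]] R.res_zero_eq by metis
  show ?thesis
  proof (cases "I = {0}")
    case True
    have "{x. 0 \<le> x \<and> x < n \<and> n dvd x} = {0}"
    proof (intro equalityI subsetI)
      fix x assume x: "x \<in> {x. 0 \<le> x \<and> x < n \<and> n dvd x}"
      show "x \<in> {0}"
      proof (cases "x = 0")
        case False then show ?thesis using x zdvd_imp_le[of n x] by auto
      qed simp
    qed (use n1 in auto)
    then show ?thesis using True n1 by (intro exI[of _ n]) auto
  next
    case False
    define S where "S = I - {0}"
    have finS: "finite S" unfolding S_def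
      by (rule finite_subset[of _ "{0..n}"]) (auto dest: Icar)
    have neS: "S \<noteq> {}" using False z S_def by auto
    define d where "d = Min S"
    have dS: "d \<in> S" using Min_in[OF finS neS] d_def by simp
    have dI: "d \<in> I" and dpos: "d > 0" and dlt: "d < n" using dS Icar unfolding S_def by force+
    have dmin: "y \<in> I \<Longrightarrow> 0 < y \<Longrightarrow> d \<le> y" for y
      using Min_le[OF finS] d_def S_def by auto
    have mulI: "0 \<le> c \<Longrightarrow> c * d < n \<Longrightarrow> c * d \<in> I" for c
    proof -
      assume c: "0 \<le> c" "c * d < n"
      have "c \<le> c * d" using c dpos by (simp add: mult_le_cancel_left1)
      hence "c < n" using c by linarith
      hence "(c * d) mod n \<in> I" using cl c dI by blast
      moreover have "0 \<le> c * d" using c dpos by simp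
      ultimately show ?thesis using c by simp
    qed
    have dvdI: "x \<in> I \<Longrightarrow> d dvd x" for x
    proof -
      assume x: "x \<in> I"
      have x0: "0 \<le> x" "x < n" using Icar x by auto
      have e: "x = x div d * d + x mod d" by simp
      have m: "0 \<le> x mod d" "x mod d < d" using dpos by auto
      have q0: "0 \<le> x div d" using x0 dpos by (simp add: pos_imp_zdiv_nonneg_iff)
      have "x div d * d \<in> I" using mulI[OF q0] e m x0 by linarith
      hence "(x - x div d * d) mod n \<in> I" by (rule subc[OF x])
      moreover have "x - x div d * d = x mod d" using e by linarith
      ultimately have "x mod d \<in> I" using m dlt by simp
      hence "x mod d = 0" using dmin m by fastforce
      thus "d dvd x" by auto
    qed
    have dn: "d dvd n"
    proof (rule ccontr)
      assume nd: "\<not> d dvd n"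
      have e: "n = n div d * d + n mod d" by simp
      have m0: "0 \<le> n mod d" "n mod d < d" using dpos by simp_all
      have m1: "n mod d \<noteq> 0" using nd by (simp add: dvd_eq_mod_eq_0)
      have m: "0 < n mod d" "n mod d < d" using m0 m1 by linarith+
      have q0: "0 \<le> n div d" using n1 dpos by (simp add: pos_imp_zdiv_nonneg_iff)
      have cI: "n div d * d \<in> I" using mulI[OF q0] e m by linarith
      hence "(0 - n div d * d) mod n \<in> I" by (rule subc[OF z])
      moreover have "(0 - n div d * d) mod n = (n - n div d * d) mod n"
        using mod_diff_left_eq[of n n "n div d * d"] by simp
      moreover have "n - n div d * d = n mod d" using e by linarith
      ultimately have "n mod d \<in> I" using m dlt by simp
      thus False using dmin m by fastforce
    qed
    have "I = {x. 0 \<le> x \<and> x < n \<and> d dvd x}"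
    proof (intro equalityI subsetI)
      fix x assume "x \<in> I" thus "x \<in> {x. 0 \<le> x \<and> x < n \<and> d dvd x}" using Icar dvdI by auto
    next
      fix x assume "x \<in> {x. 0 \<le> x \<and> x < n \<and> d dvd x}"
      then obtain c where x: "0 \<le> x" "x < n" "x = d * c" by auto
      have "0 \<le> c" using x dpos by (simp add: zero_le_mult_iff)
      thus "x \<in> I" using mulI[of c] x by (simp add: mult.commute)
    qed
    thus ?thesis using dpos dn by blast
  qed
qed

lemma div_cmp:
  fixes P Q R d e :: int and a :: nat
  assumes pr: "prime P" "prime Q" "prime R" "P \<noteq> Q" "P \<noteq> R" "Q \<noteq> R"
    and dd: "d dvd P^a*Q*R" "e dvd P^a*Q*R" "d > 0" "e > 0"
    and tq: "Q dvd d \<longleftrightarrow> Q dvd e" and tr: "R dvd d \<longleftrightarrow> R dvd e"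
  shows "d dvd e \<or> e dvd d"
proof -
  define N where "N = P^a*Q*R"
  have N0: "N \<noteq> 0" using pr unfolding N_def by auto
  have mN: "multiplicity s N = (if s = P then a else 0) + (if s = Q then 1 else 0) + (if s = R then 1 else 0)"
    if s: "prime s" for s
  proof -
    have "multiplicity s N = multiplicity s (P^a) + multiplicity s Q + multiplicity s R"
    proof -
      have ne: "P^a \<noteq> 0" "Q \<noteq> 0" "R \<noteq> 0" "P^a * Q \<noteq> 0" using pr by auto
      have se: "prime_elem s" using s prime_imp_prime_elem by blast
      show ?thesis unfolding N_def
        using prime_elem_multiplicity_mult_distrib[OF se ne(4) ne(3)]
          prime_elem_multiplicity_mult_distrib[OF se ne(1) ne(2)] by simp
    qed
    moreover have "multiplicity s (P^a) = (if s = P then a else 0)"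
      using s pr by (auto simp: multiplicity_distinct_prime_power)
    moreover have "multiplicity s Q = (if s = Q then 1 else 0)"
      using s pr by (auto simp: prime_multiplicity_other multiplicity_self)
    moreover have "multiplicity s R = (if s = R then 1 else 0)"
      using s pr by (auto simp: prime_multiplicity_other multiplicity_self)
    ultimately show ?thesis by simp
  qed
  have key: "multiplicity s x \<le> multiplicity s y"
    if s: "prime s" "s \<noteq> P" and xy: "x dvd N" "y dvd N" "x > 0" "y > 0"
      "Q dvd x \<longleftrightarrow> Q dvd y" "R dvd x \<longleftrightarrow> R dvd y" for s x y :: int
  proof -
    have lx: "multiplicity s x \<le> multiplicity s N" "multiplicity s y \<le> multiplicity s N"
      using dvd_imp_multiplicity_le xy N0 by blast+
    have zx: "multiplicity s x = 0 \<longleftrightarrow> \<not> s dvd x" "multiplicity s y = 0 \<longleftrightarrow> \<not> s dvd y"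
      using multiplicity_eq_zero_iff[of x s] multiplicity_eq_zero_iff[of y s] xy s not_prime_unit by auto
    show ?thesis
    proof (cases "s = Q \<or> s = R")
      case True
      hence "multiplicity s N = 1" using mN[OF s(1)] s pr by auto
      then show ?thesis using lx zx xy True by (cases "s = Q") auto
    next
      case False
      hence "multiplicity s N = 0" using mN[OF s(1)] s by auto
      then show ?thesis using lx by simp
    qed
  qed
  show ?thesis
  proof (cases "multiplicity P d \<le> multiplicity P e")
    case True
    note c = this
    have "d dvd e"
    proof (rule multiplicity_le_imp_dvd)
      show "d \<noteq> 0" using dd by simp
      fix s :: int assume s: "prime s"
      show "multiplicity s d \<le> multiplicity s e"
      proof (cases "s = P")
        case True thus ?thesis using c by simp
      next
        case False thus ?thesis using key[OF s False, of d e] dd tq tr N_def by auto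
      qed
    qed
    thus ?thesis ..
  next
    case False
    note c = this
    have "e dvd d"
    proof (rule multiplicity_le_imp_dvd)
      show "e \<noteq> 0" using dd by simp
      fix s :: int assume s: "prime s"
      show "multiplicity s e \<le> multiplicity s d"
      proof (cases "s = P")
        case True thus ?thesis using c by simp
      next
        case False thus ?thesis using key[OF s False, of e d] dd tq tr N_def by auto
      qed
    qed
    thus ?thesis ..
  qed
qed

theorem lemma4:
  fixes p q r \<alpha> k :: nat and n :: int and v :: "nat \<Rightarrow> int set"
  assumes "prime p" "prime q" "prime r" "p \<noteq> q" "p \<noteq> r" "q \<noteq> r"
    and "\<alpha> \<ge> 1"
    and "n = int (p ^ \<alpha> * q * r)"
    and "odd k" and "k > 3"
  shows "\<not> AG_induced_cycle (residue_ring n) k v"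
proof
  assume cyc: "AG_induced_cycle (residue_ring n) k v"
  have k5: "5 \<le> k"
  proof (rule ccontr)
    assume "\<not> 5 \<le> k" hence "k = 4" using assms(10) by simp
    thus False using assms(9) by simp
  qed
  have nint: "n = int p ^ \<alpha> * int q * int r" using assms(8) by simp
  have q2': "int q \<ge> 2" "int r \<ge> 2" "int p \<ge> 1"
    using prime_ge_2_nat[OF assms(2)] prime_ge_2_nat[OF assms(3)] prime_ge_2_nat[OF assms(1)]
    by linarith+
  have pa: "int p ^ \<alpha> \<ge> 1" using q2'(3) by (rule one_le_power)
  have qr: "int q * int r \<ge> 2 * 2" using q2' by (intro mult_mono) auto
  have "int p ^ \<alpha> * (int q * int r) \<ge> 1 * 4" using pa qr by (intro mult_mono) auto
  hence n1: "n > 1" using nint by (simp add: mult.assoc)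
  interpret Rn: residues n "residue_ring n" by unfold_locales (simp add: n1)
  have ringR: "ring (residue_ring n)" by (rule Rn.ring_axioms)
  have "\<forall>i. \<exists>d. i < k \<longrightarrow> d > 0 \<and> d dvd n \<and> v i = {x. 0 \<le> x \<and> x < n \<and> d dvd x}"
  proof
    fix i
    show "\<exists>d. i < k \<longrightarrow> d > 0 \<and> d dvd n \<and> v i = {x. 0 \<le> x \<and> x < n \<and> d dvd x}"
    proof (cases "i < k")
      case True
      hence "ideal (v i) (residue_ring n)" using cyc
        unfolding AG_induced_cycle_def AG_vertex_def by blast
      then show ?thesis using ideal_char[OF n1] by blast
    qed simp
  qed
  then obtain D where D: "\<And>i. i < k \<Longrightarrow> D i > 0 \<and> D i dvd n \<and> v i = {x. 0 \<le> x \<and> x < n \<and> D i dvd x}"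
    by metis
  define f where "f i = (int q dvd D i, int r dvd D i)" for i
  have "\<not> inj_on f {0..<5}"
  proof
    assume inj: "inj_on f {0..<5}"
    have "card (f ` {0..<5}) = 5" using card_image[OF inj] by simp
    moreover have "card (f ` {0..<5}) \<le> card (UNIV :: (bool \<times> bool) set)"
      by (rule card_mono) auto
    moreover have "card (UNIV :: (bool \<times> bool) set) = 4"
      by (simp add: UNIV_Times_UNIV[symmetric] card_cartesian_product del: UNIV_Times_UNIV)
    ultimately show False by simp
  qed
  then obtain i j where ij: "i < 5" "j < 5" "i \<noteq> j" "f i = f j"
    unfolding inj_on_def by auto
  have ik: "i < k" "j < k" using ij k5 by auto
  have pr: "prime (int p)" "prime (int q)" "prime (int r)" "int p \<noteq> int q" "int p \<noteq> int r" "int q \<noteq> int r"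
    using assms(1-6) by auto
  have "D i dvd D j \<or> D j dvd D i"
    by (rule div_cmp[OF pr, of _ \<alpha>]) (use D[OF ik(1)] D[OF ik(2)] nint ij(4) f_def in auto)
  then show False
  proof
    assume "D i dvd D j"
    hence "v j \<subseteq> v i" using D[OF ik(1)] D[OF ik(2)] by (auto intro: dvd_trans)
    thus False using graph_lemma[OF ringR cyc k5 ik(1) ik(2) ij(3)] by blast
  next
    assume "D j dvd D i"
    hence "v i \<subseteq> v j" using D[OF ik(1)] D[OF ik(2)] by (auto intro: dvd_trans)
    thus False using graph_lemma[OF ringR cyc k5 ik(2) ik(1)] ij(3) by blast
  qed
qed

end
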